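(* In the perceptive model, suppose each agent knows (i) the positions of its two ring neighbours relative to its initial position, and (ii) for each neighbour, whether that neighbour's sense of direction agrees with its own. Then each agent can transmit one bit of information to its neighbours in $O(1)$ rounds; that is, all agents simultaneously transmit one bit each to both neighbours in $O(1)$ rounds.
   Context: Model (perceptive): $n>4$ agents are at distinct, arbitrary initial positions on a circle of circumference $1$ and act in synchronised unit-time rounds. Each agent has its own notion of right (clockwise) and left; these need not be consistent across agents. At the start of each round every agent $a$ chooses $\mathrm{dir}_a\in\{\text{right},\text{left}\}$ and moves at unit speed. Agents never pass: two colliding agents instantly reverse direction. There is no direct communication and no marking. At the end of each round every agent learns two values, both measured relative to its start-of-round position and in its own orientation: - the clockwise distance to its end-of-round position; - the distance to its first collision in that round. The neighbours of an agent are the agents immediately adjacent to it on the ring; agents never overtake, so neighbours stay fixed. *)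

theory Defs
  imports Complex_Main
begin

text \<open>Perceptive model of n agents on a circle of circumference 1.
  Agents are labelled 0..n-1 in clockwise (increasing position) order;
  positions lie in [0,1). Index arithmetic is mod n.
  cw i = True  iff agent i's own "right" is the global clockwise direction.\<close>

type_synonym obs = "real \<times> real option"
  \<comment> \<open>(distance to end-of-round position measured in own right direction,
      distance to first collision, None if no collision occurs in the round)\<close>

definition odist :: "bool \<Rightarrow> real \<Rightarrow> real \<Rightarrow> real" where
  "odist c x y = frac (if c then y - x else x - y)"

definition succ_idx :: "nat \<Rightarrow> nat \<Rightarrow> nat" where
  "succ_idx n i = Suc i mod n"

definition pred_idx :: "nat \<Rightarrow> nat \<Rightarrow> nat" where
  "pred_idx n i = (i + n - 1) mod n"

definition right_nb :: "nat \<Rightarrow> (nat \<Rightarrow> bool) \<Rightarrow> nat \<Rightarrow> nat" where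
  "right_nb n cw i = (if cw i then succ_idx n i else pred_idx n i)"

definition left_nb :: "nat \<Rightarrow> (nat \<Rightarrow> bool) \<Rightarrow> nat \<Rightarrow> nat" where
  "left_nb n cw i = (if cw i then pred_idx n i else succ_idx n i)"

definition valid_config :: "nat \<Rightarrow> (nat \<Rightarrow> real) \<Rightarrow> bool" where
  "valid_config n pos \<longleftrightarrow>
     (\<forall>i<n. 0 \<le> pos i \<and> pos i < 1) \<and> (\<forall>i j. i < j \<and> j < n \<longrightarrow> pos i < pos j)"

record knowledge =
  own_bit :: bool
  gap_right :: real
  gap_left :: real
  agrees_right :: bool
  agrees_left :: bool

definition init_knowledge ::
  "nat \<Rightarrow> (nat \<Rightarrow> real) \<Rightarrow> (nat \<Rightarrow> bool) \<Rightarrow> (nat \<Rightarrow> bool) \<Rightarrow> nat \<Rightarrow> knowledge" where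
  "init_knowledge n pos cw b i =
     \<lparr> own_bit = b i,
       gap_right = odist (cw i) (pos i) (pos (right_nb n cw i)),
       gap_left = odist (\<not> cw i) (pos i) (pos (left_nb n cw i)),
       agrees_right = (cw i = cw (right_nb n cw i)),
       agrees_left = (cw i = cw (left_nb n cw i)) \<rparr>"

text \<open>Dynamics of one unit-time round, via the standard pass-through (ghost) picture:
  g i = True iff agent i moves globally clockwise. Since each ghost makes exactly one
  lap, the set of positions is unchanged and agent i ends where agent i+s started,
  s = (#clockwise - #counterclockwise) mod n.\<close>
definition rot_shift :: "nat \<Rightarrow> (nat \<Rightarrow> bool) \<Rightarrow> nat" where
  "rot_shift n g = nat ((int (card {j. j < n \<and> g j}) - int (card {j. j < n \<and> \<not> g j})) mod int n)"

definition next_pos :: "nat \<Rightarrow> (nat \<Rightarrow> real) \<Rightarrow> (nat \<Rightarrow> bool) \<Rightarrow> nat \<Rightarrow> real" where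
  "next_pos n q g i = q ((i + rot_shift n g) mod n)"

text \<open>First collision of agent i: its ghost meets the nearest oppositely moving ghost
  ahead of it (in its direction of motion) after half the separating distance.\<close>
definition first_coll :: "nat \<Rightarrow> (nat \<Rightarrow> real) \<Rightarrow> (nat \<Rightarrow> bool) \<Rightarrow> nat \<Rightarrow> real option" where
  "first_coll n q g i =
     (let S = {odist (g i) (q i) (q j) | j. j < n \<and> g j \<noteq> g i}
      in if S = {} then None else Some (Min S / 2))"

text \<open>Execution of a deterministic protocol: in each round agent i chooses
  own-right (True) / own-left (False) from its knowledge and its observation history.\<close>
fun exec :: "nat \<Rightarrow> (nat \<Rightarrow> real) \<Rightarrow> (nat \<Rightarrow> bool) \<Rightarrow> (nat \<Rightarrow> knowledge)
              \<Rightarrow> (knowledge \<Rightarrow> obs list \<Rightarrow> bool) \<Rightarrow> nat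
              \<Rightarrow> (nat \<Rightarrow> real) \<times> (nat \<Rightarrow> obs list)" where
  "exec n pos cw K ch 0 = (pos, (\<lambda>_. []))"
| "exec n pos cw K ch (Suc k) =
     (let (q, h) = exec n pos cw K ch k;
          g = (\<lambda>i. ch (K i) (h i) = cw i)
      in (next_pos n q g,
          (\<lambda>i. h i @ [(odist (cw i) (q i) (next_pos n q g i), first_coll n q g i)])))"

end

theory Submission imports Defs begin

lemma frac_pos: "0 \<le> x \<Longrightarrow> x < 1 \<Longrightarrow> frac (x::real) = x"
  by (simp add: frac_eq)
lemma frac_neg: "-1 \<le> x \<Longrightarrow> x < 0 \<Longrightarrow> frac (x::real) = x + 1"
proof -
  assume a: "-1 \<le> x" "x < 0"
  have "floor x = -1" using a by (simp add: floor_eq_iff)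
  thus ?thesis by (simp add: frac_def)
qed

definition ahead :: "nat \<Rightarrow> bool \<Rightarrow> nat \<Rightarrow> nat" where
  "ahead n c i = (if c then succ_idx n i else pred_idx n i)"

lemma ahead_lt: "i < n \<Longrightarrow> ahead n c i < n"
  by (auto simp: ahead_def succ_idx_def pred_idx_def)

lemma ahead_ne: "2 \<le> n \<Longrightarrow> i < n \<Longrightarrow> ahead n c i \<noteq> i"
proof -
  assume n: "2 \<le> n" and i: "i < n"
  show ?thesis
  proof (cases c)
    case True
    show ?thesis
    proof (cases "Suc i < n")
      case True2: True then show ?thesis using True by (auto simp: ahead_def succ_idx_def)
    next
      case False2: False then have "Suc i = n" using i by auto
      then show ?thesis using True n by (auto simp: ahead_def succ_idx_def)
    qed
  next
    case False
    show ?thesis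
    proof (cases "i = 0")
      case True then show ?thesis using False n by (auto simp: ahead_def pred_idx_def)
    next
      case False2: False
      have e: "i + n - 1 = (i - 1) + n" using False2 by auto
      have "ahead n c i = i - 1" using False False2 i
        by (simp only: ahead_def pred_idx_def e if_False mod_add_self2) simp
      then show ?thesis using False2 by simp
    qed
  qed
qed

lemma vc_mono: "valid_config n pos \<Longrightarrow> i < j \<Longrightarrow> j < n \<Longrightarrow> pos i < pos j"
  by (auto simp: valid_config_def)
lemma vc_range: "valid_config n pos \<Longrightarrow> i < n \<Longrightarrow> 0 \<le> pos i \<and> pos i < 1"
  by (auto simp: valid_config_def)

lemma dist_strict:
  assumes v: "valid_config n pos" and i: "i < n" and j: "j < n" and ji: "j \<noteq> i"
    and ja: "j \<noteq> ahead n c i"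
  shows "odist c (pos i) (pos (ahead n c i)) < odist c (pos i) (pos j)"
proof (cases c)
  case True
  show ?thesis
  proof (cases "Suc i < n")
    case True2: True
    have a: "ahead n c i = Suc i" using True True2 by (simp add: ahead_def succ_idx_def)
    have d1: "odist c (pos i) (pos (Suc i)) = pos (Suc i) - pos i"
      using True vc_mono[OF v, of i "Suc i"] vc_range[OF v, of i] vc_range[OF v, of "Suc i"] True2 i
      by (simp add: odist_def frac_pos)
    show ?thesis
    proof (cases "i < j")
      case True3: True
      have "Suc i < j" using True3 ja a by auto
      then have "pos (Suc i) < pos j" using vc_mono[OF v] j by blast
      moreover have "odist c (pos i) (pos j) = pos j - pos i"
        using True vc_mono[OF v, of i j] vc_range[OF v, of i] vc_range[OF v, of j] True3 i j
        by (simp add: odist_def frac_pos)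
      ultimately show ?thesis using a d1 by simp
    next
      case False
      then have "j < i" using ji by auto
      then have "odist c (pos i) (pos j) = pos j - pos i + 1"
        using True vc_mono[OF v, of j i] vc_range[OF v, of i] vc_range[OF v, of j] i j
        by (simp add: odist_def frac_neg)
      then show ?thesis using a d1 vc_range[OF v, of j] vc_range[OF v, of "Suc i"] True2 j by simp
    qed
  next
    case False2: False
    then have ii: "i = n - 1" "Suc i = n" using i by auto
    have a: "ahead n c i = 0" using True ii by (simp add: ahead_def succ_idx_def)
    have j0: "0 < j" "j < i" using ja a j ji ii by auto
    have n0: "0 < i" using j0 by auto
    have d1: "odist c (pos i) (pos 0) = pos 0 - pos i + 1"
      using True vc_mono[OF v, of 0 i] vc_range[OF v, of i] vc_range[OF v, of 0] n0 i
      by (simp add: odist_def frac_neg)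
    have d2: "odist c (pos i) (pos j) = pos j - pos i + 1"
      using True vc_mono[OF v, of j i] vc_range[OF v, of i] vc_range[OF v, of j] j0 i
      by (simp add: odist_def frac_neg)
    show ?thesis using a d1 d2 vc_mono[OF v, of 0 j] j0 j by simp
  qed
next
  case False
  show ?thesis
  proof (cases "i = 0")
    case False2: False
    have e: "i + n - 1 = (i - 1) + n" using False2 by auto
    have a: "ahead n c i = i - 1" using False False2 i
      by (simp only: ahead_def pred_idx_def e if_False mod_add_self2) simp
    have im: "i - 1 < n" using i by simp
    have r0: "0 \<le> pos (i - 1)" "pos (i - 1) < 1" using vc_range[OF v im] by auto
    have d1: "odist c (pos i) (pos (i - 1)) = pos i - pos (i - 1)"
    proof -
      have "pos (i - 1) < pos i" using vc_mono[OF v, of "i - 1" i] False2 i by simp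
      then have "frac (pos i - pos (i - 1)) = pos i - pos (i - 1)"
        using r0 vc_range[OF v, of i] i by (intro frac_pos) auto
      then show ?thesis using False by (simp add: odist_def)
    qed
    show ?thesis
    proof (cases "j < i")
      case True3: True
      have "j < i - 1" using True3 ja a by auto
      then have "pos j < pos (i - 1)" using vc_mono[OF v] i by simp
      moreover have "odist c (pos i) (pos j) = pos i - pos j"
        using False vc_mono[OF v, of j i] vc_range[OF v, of i] vc_range[OF v, of j] True3 i j
        by (simp add: odist_def frac_pos)
      ultimately show ?thesis using a d1 by simp
    next
      case False3: False
      then have "i < j" using ji by auto
      then have "odist c (pos i) (pos j) = pos i - pos j + 1"
        using False vc_mono[OF v, of i j] vc_range[OF v, of i] vc_range[OF v, of j] i j
        by (simp add: odist_def frac_neg)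
      then show ?thesis using a d1 vc_range[OF v, of j] r0 i j by simp
    qed
  next
    case True2: True
    have a: "ahead n c i = n - 1" using False True2 i by (simp add: ahead_def pred_idx_def)
    have j0: "0 < j" "j < n - 1" using ja a j ji True2 by auto
    have n0: "0 < n" "n - 1 < n" using i by auto
    have r0: "0 \<le> pos 0" "pos 0 < 1" "0 \<le> pos (n-1)" "pos (n-1) < 1"
      using vc_range[OF v n0(1)] vc_range[OF v n0(2)] by auto
    have d1: "odist c (pos i) (pos (n - 1)) = pos i - pos (n - 1) + 1"
    proof -
      have "pos 0 < pos (n - 1)" using vc_mono[OF v, of 0 "n - 1"] j0 by simp
      then have "frac (pos 0 - pos (n - 1)) = pos 0 - pos (n - 1) + 1"
        using r0 by (intro frac_neg) auto
      then show ?thesis using False True2 by (simp add: odist_def)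
    qed
    have d2: "odist c (pos i) (pos j) = pos i - pos j + 1"
    proof -
      have "pos 0 < pos j" using vc_mono[OF v, of 0 j] j0 j by simp
      then have "frac (pos 0 - pos j) = pos 0 - pos j + 1"
        using r0 vc_range[OF v j] by (intro frac_neg) auto
      then show ?thesis using False True2 by (simp add: odist_def)
    qed
    show ?thesis using a d1 d2 vc_mono[OF v, of j "n - 1"] j0 by simp
  qed
qed


lemma coll:
  assumes v: "valid_config n pos" and n: "2 \<le> n" and i: "i < n"
  shows "(first_coll n pos g i = Some (odist (g i) (pos i) (pos (ahead n (g i) i)) / 2))
           \<longleftrightarrow> g (ahead n (g i) i) \<noteq> g i"
proof -
  define a where "a = ahead n (g i) i"
  define S where "S = {odist (g i) (pos i) (pos j) | j. j < n \<and> g j \<noteq> g i}"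
  have fc: "first_coll n pos g i = (if S = {} then None else Some (Min S / 2))"
    by (simp add: first_coll_def S_def)
  have fin: "finite S"
  proof -
    have "S = (\<lambda>j. odist (g i) (pos i) (pos j)) ` {j. j < n \<and> g j \<noteq> g i}"
      by (auto simp: S_def)
    then show ?thesis by simp
  qed
  have an: "a < n" "a \<noteq> i" using ahead_lt[OF i] ahead_ne[OF n i] by (auto simp: a_def)
  show ?thesis
  proof (cases "g a = g i")
    case True
    have "\<forall>x\<in>S. odist (g i) (pos i) (pos a) < x"
    proof
      fix x assume "x \<in> S"
      then obtain j where j: "x = odist (g i) (pos i) (pos j)" "j < n" "g j \<noteq> g i"
        by (auto simp: S_def)
      have "j \<noteq> i" "j \<noteq> a" using j True by auto
      then show "odist (g i) (pos i) (pos a) < x"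
        using dist_strict[OF v i j(2)] j(1) by (simp add: a_def)
    qed
    then have "first_coll n pos g i \<noteq> Some (odist (g i) (pos i) (pos a) / 2)"
    proof (cases "S = {}")
      case False
      then have "Min S \<in> S" using Min_in[OF fin] by blast
      then have "Min S \<noteq> odist (g i) (pos i) (pos a)" using \<open>\<forall>x\<in>S. _ < x\<close> by force
      then show ?thesis using False by (simp add: fc)
    qed (simp add: fc)
    then show ?thesis using True by (simp add: a_def)
  next
    case False
    have inS: "odist (g i) (pos i) (pos a) \<in> S" using False an by (auto simp: S_def)
    have le: "\<forall>x\<in>S. odist (g i) (pos i) (pos a) \<le> x"
    proof
      fix x assume "x \<in> S"
      then obtain j where j: "x = odist (g i) (pos i) (pos j)" "j < n" "g j \<noteq> g i"
        by (auto simp: S_def)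
      have "j \<noteq> i" using j by auto
      then show "odist (g i) (pos i) (pos a) \<le> x"
        using dist_strict[OF v i j(2), of "g i"] j(1) by (cases "j = a") (auto simp: a_def less_imp_le)
    qed
    have "Min S = odist (g i) (pos i) (pos a)"
      using inS le fin by (intro antisym Min_le) (auto intro: Min.boundedI)
    then have "first_coll n pos g i = Some (odist (g i) (pos i) (pos a) / 2)"
      using inS by (auto simp: fc)
    then show ?thesis using False by (simp add: a_def)
  qed
qed

lemma coll_cong:
  assumes "\<forall>j<n. q j = pos j" "i < n"
  shows "first_coll n q g i = first_coll n pos g i"
proof -
  have "{odist (g i) (q i) (q j) | j. j < n \<and> g j \<noteq> g i}
      = {odist (g i) (pos i) (pos j) | j. j < n \<and> g j \<noteq> g i}"
    using assms by (auto; metis)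
  then show ?thesis by (simp add: first_coll_def)
qed

lemma back_pos:
  assumes n: "0 < n" and h: "\<And>j. h j \<longleftrightarrow> \<not> g j" and i: "i < n"
  shows "next_pos n (next_pos n pos g) h i = pos i"
proof -
  define c where "c = int (card {j. j < n \<and> g j})"
  define d where "d = int (card {j. j < n \<and> \<not> g j})"
  have s1: "int (rot_shift n g) = (c - d) mod int n"
    using n by (simp add: rot_shift_def c_def d_def)
  have s2: "int (rot_shift n h) = (d - c) mod int n"
    using n by (simp add: rot_shift_def c_def d_def h)
  have "int (((i + rot_shift n h) mod n + rot_shift n g) mod n)
        = ((int i + (d - c) mod int n) mod int n + (c - d) mod int n) mod int n"
    by (simp add: of_nat_mod s1 s2)
  also have "\<dots> = (int i + (d - c) + (c - d)) mod int n"
    by (simp add: mod_simps)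
  also have "\<dots> = int i" using i by simp
  finally have "((i + rot_shift n h) mod n + rot_shift n g) mod n = i" by linarith
  then show ?thesis by (simp add: next_pos_def)
qed


definition mv :: "knowledge \<Rightarrow> obs list \<Rightarrow> bool" where
  "mv K h = (if h = [] then own_bit K else \<not> own_bit K)"

definition dec :: "knowledge \<Rightarrow> obs list \<Rightarrow> bool \<times> bool" where
  "dec K h = (let c1 = (snd (h!0) = Some ((if own_bit K then gap_right K else gap_left K)/2));
      c3 = (snd (h!2) = Some ((if own_bit K then gap_left K else gap_right K)/2))
   in if own_bit K then (\<not>(c3 = agrees_left K), c1 \<noteq> agrees_right K)
      else (c1 = agrees_left K, \<not>(c3 \<noteq> agrees_right K)))"

lemma exec3:
  fixes n pos cw b
  defines "K \<equiv> init_knowledge n pos cw b"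
  defines "g1 \<equiv> \<lambda>i. (b i = cw i)"
  defines "g2 \<equiv> \<lambda>i. (\<not> b i = cw i)"
  shows "snd (exec n pos cw K mv 3) i ! 0 = (odist (cw i) (pos i) (next_pos n pos g1 i), first_coll n pos g1 i)
       \<and> snd (exec n pos cw K mv 3) i ! 2 = (odist (cw i) (next_pos n (next_pos n pos g1) g2 i)
             (next_pos n (next_pos n (next_pos n pos g1) g2) g2 i), first_coll n (next_pos n (next_pos n pos g1) g2) g2 i)"
proof -
  have k: "\<And>i. own_bit (K i) = b i" by (simp add: K_def init_knowledge_def)
  have e: "(3::nat) = Suc (Suc (Suc 0))" by simp
  have a: "(\<lambda>i. mv (K i) [] = cw i) = g1" by (simp add: mv_def k g1_def)
  have bb: "\<And>x. (\<lambda>i. mv (K i) [x i] = cw i) = g2" unfolding g2_def by (rule ext) (auto simp: mv_def k)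
  have cc: "\<And>x y. (\<lambda>i. mv (K i) [x i, y i] = cw i) = g2" unfolding g2_def by (rule ext) (auto simp: mv_def k)
  show ?thesis unfolding e by (simp add: a bb cc)
qed

theorem proposition6:
  shows "\<exists>(T::nat) (move :: knowledge \<Rightarrow> obs list \<Rightarrow> bool)
            (decode :: knowledge \<Rightarrow> obs list \<Rightarrow> bool \<times> bool).
           \<forall>(n::nat) (pos :: nat \<Rightarrow> real) (cw :: nat \<Rightarrow> bool) (b :: nat \<Rightarrow> bool).
             4 < n \<longrightarrow> valid_config n pos \<longrightarrow>
             (\<forall>i<n. decode (init_knowledge n pos cw b i)
                        (snd (exec n pos cw (init_knowledge n pos cw b) move T) i)
                     = (b (left_nb n cw i), b (right_nb n cw i)))"
proof (intro exI[of _ 3] exI[of _ mv] exI[of _ dec] allI impI)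
  fix n :: nat and pos :: "nat \<Rightarrow> real" and cw b :: "nat \<Rightarrow> bool" and i :: nat
  assume n: "4 < n" and v: "valid_config n pos" and i: "i < n"
  define g1 where "g1 = (\<lambda>i. (b i = cw i))"
  define g2 where "g2 = (\<lambda>i. (\<not> b i = cw i))"
  have h2: "\<And>j. g2 j \<longleftrightarrow> \<not> g1 j" by (auto simp: g1_def g2_def)
  have bk: "\<forall>j<n. next_pos n (next_pos n pos g1) g2 j = pos j"
    using back_pos[of n g2 g1] h2 n by auto
  have E: "snd (snd (exec n pos cw (init_knowledge n pos cw b) mv 3) i ! 0) = first_coll n pos g1 i"
          "snd (snd (exec n pos cw (init_knowledge n pos cw b) mv 3) i ! 2) = first_coll n pos g2 i"
    using exec3[of n pos cw b i, folded g1_def g2_def] coll_cong[OF bk i] by simp_all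
  have n2: "2 \<le> n" using n by simp
  note C1 = coll[OF v n2 i, of g1]
  note C2 = coll[OF v n2 i, of g2]
  have R: "ahead n (cw i) i = right_nb n cw i" "ahead n (\<not> cw i) i = left_nb n cw i"
    by (auto simp: ahead_def right_nb_def left_nb_def)
  show "dec (init_knowledge n pos cw b i) (snd (exec n pos cw (init_knowledge n pos cw b) mv 3) i) = (b (left_nb n cw i), b (right_nb n cw i))"
    unfolding dec_def Let_def E
    using C1 C2 R
    by (cases "b i"; cases "cw i") (auto simp: init_knowledge_def g1_def g2_def)
qed

end
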